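(* There are constants $C_5$ and $\Delta_1$ (depending only on $r$) such that for every subset $U\subset V_n$ with $|U|=m$ and every $\alpha\in(0,1)$, $$\mathbb P\big(e(U,U^c)\le\alpha r|U|\big)\le C_5\exp\left(-\frac r2(1-\alpha)\,m\log(n/m)+\Delta_1 m\right).$$
   Context: Fix an integer $r\ge3$, let $V_n=\{1,\dots,n\}$ with $rn$ even, and let $\mathbb P$ be the law of the random multigraph $G_n$ on $V_n$ obtained by giving each vertex $r$ half-edges and pairing all $rn$ half-edges uniformly at random. For $U\subset V_n$, $e(U,U^c)$ is the number of edges of $G_n$ (pairs of matched half-edges) with one endpoint in $U$ and the other in $U^c=V_n\setminus U$. *)

theory Defs
  imports Complex_Main
begin

text \<open>Configuration model: vertex v in {1..n} carries half-edges (v,i), i < r.\<close>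
definition half_edges :: "nat \<Rightarrow> nat \<Rightarrow> (nat \<times> nat) set" where
  "half_edges r n = {1..n} \<times> {..<r}"

definition perfect_matchings :: "'a set \<Rightarrow> 'a set set set" where
  "perfect_matchings H =
     {M. (\<forall>e\<in>M. e \<subseteq> H \<and> card e = 2) \<and> (\<forall>h\<in>H. \<exists>!e. e \<in> M \<and> h \<in> e)}"

definition cut_edges :: "nat set \<Rightarrow> (nat \<times> nat) set set \<Rightarrow> nat" where
  "cut_edges U M = card {e \<in> M. \<exists>h\<in>e. \<exists>h'\<in>e. fst h \<in> U \<and> fst h' \<notin> U}"

definition config_prob :: "nat \<Rightarrow> nat \<Rightarrow> ((nat \<times> nat) set set \<Rightarrow> bool) \<Rightarrow> real" where
  "config_prob r n P =
     real (card {M \<in> perfect_matchings (half_edges r n). P M})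
     / real (card (perfect_matchings (half_edges r n)))"

end

theory Submission
  imports Defs
begin

fun pmc :: "nat \<Rightarrow> nat" where
  "pmc 0 = 1" | "pmc (Suc 0) = 0" | "pmc (Suc (Suc k)) = Suc k * pmc k"

lemma pm_empty: "perfect_matchings {} = {{}}"
  unfolding perfect_matchings_def by auto

lemma pm_sub: "M \<in> perfect_matchings H \<Longrightarrow> e \<in> M \<Longrightarrow> e \<subseteq> H \<and> card e = 2"
  unfolding perfect_matchings_def by auto

lemma pm_uniq: "M \<in> perfect_matchings H \<Longrightarrow> h \<in> H \<Longrightarrow> e \<in> M \<Longrightarrow> e' \<in> M \<Longrightarrow> h \<in> e \<Longrightarrow> h \<in> e' \<Longrightarrow> e = e'"
  unfolding perfect_matchings_def by blast

lemma pm_ex: "M \<in> perfect_matchings H \<Longrightarrow> h \<in> H \<Longrightarrow> \<exists>e\<in>M. h \<in> e"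
  unfolding perfect_matchings_def by blast

lemma pm_step:
  assumes "h \<in> H"
  shows "perfect_matchings H = (\<Union>x\<in>H-{h}. insert {h,x} ` perfect_matchings (H-{h,x}))"
proof
  show "perfect_matchings H \<subseteq> (\<Union>x\<in>H-{h}. insert {h,x} ` perfect_matchings (H-{h,x}))"
  proof
    fix M assume M: "M \<in> perfect_matchings H"
    obtain e where e: "e \<in> M" "h \<in> e" using pm_ex[OF M assms] by blast
    have "card e = 2" "e \<subseteq> H" using pm_sub[OF M e(1)] by auto
    then obtain a b where ab: "e = {a,b}" "a \<noteq> b" by (meson card_2_iff)
    then obtain x where x: "e = {h,x}" "x \<noteq> h" using e(2) by blast
    have xH: "x \<in> H" using x \<open>e \<subseteq> H\<close> by auto
    have "M - {e} \<in> perfect_matchings (H-{h,x})"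
      unfolding perfect_matchings_def
    proof (intro CollectI conjI ballI)
      fix e' assume e': "e' \<in> M - {e}"
      have "h \<notin> e'" using pm_uniq[OF M assms e(1), of e'] e' e by auto
      moreover have "x \<notin> e'" using pm_uniq[OF M xH e(1), of e'] e' x by auto
      ultimately show "e' \<subseteq> H - {h, x}" "card e' = 2" using pm_sub[OF M, of e'] e' by auto
    next
      fix h' assume h': "h' \<in> H - {h,x}"
      then obtain e' where "e' \<in> M" "h' \<in> e'" using pm_ex[OF M] by blast
      moreover have "e' \<noteq> e" using h' x \<open>h' \<in> e'\<close> by auto
      ultimately show "\<exists>!e'. e' \<in> M - {e} \<and> h' \<in> e'"
        using pm_uniq[OF M, of h'] h' by blast
    qed
    moreover have "M = insert {h,x} (M - {e})" using e x by auto
    ultimately show "M \<in> (\<Union>x\<in>H-{h}. insert {h,x} ` perfect_matchings (H-{h,x}))"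
      using xH x by blast
  qed
next
  show "(\<Union>x\<in>H-{h}. insert {h,x} ` perfect_matchings (H-{h,x})) \<subseteq> perfect_matchings H"
  proof (rule subsetI)
    fix M' assume "M' \<in> (\<Union>x\<in>H-{h}. insert {h,x} ` perfect_matchings (H-{h,x}))"
    then obtain x M where x: "x \<in> H" "x \<noteq> h" and M: "M \<in> perfect_matchings (H-{h,x})"
      and M': "M' = insert {h,x} M" by blast
    show "M' \<in> perfect_matchings H" unfolding M'
      
      unfolding perfect_matchings_def
    proof (intro CollectI conjI ballI)
      fix e assume "e \<in> insert {h,x} M"
      then show "e \<subseteq> H" "card e = 2" using pm_sub[OF M, of e] x assms by auto
    next
      fix h' assume h': "h' \<in> H"
      show "\<exists>!e. e \<in> insert {h, x} M \<and> h' \<in> e"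
      proof (cases "h' \<in> {h,x}")
        case True
        show ?thesis
        proof (rule ex1I[of _ "{h,x}"])
          show "{h, x} \<in> insert {h, x} M \<and> h' \<in> {h, x}" using True by simp
          fix e' assume e': "e' \<in> insert {h, x} M \<and> h' \<in> e'"
          show "e' = {h,x}"
          proof (rule ccontr)
            assume "e' \<noteq> {h,x}"
            then have "e' \<in> M" using e' by auto
            then have "e' \<subseteq> H - {h,x}" using pm_sub[OF M] by blast
            then show False using e' True by auto
          qed
        qed
      next
        case False
        then have "h' \<in> H - {h,x}" using h' by auto
        then obtain e where e: "e \<in> M" "h' \<in> e" using pm_ex[OF M] by blast
        show ?thesis
        proof (rule ex1I[of _ e])
          show "e \<in> insert {h, x} M \<and> h' \<in> e" using e by simp
          fix e' assume e': "e' \<in> insert {h, x} M \<and> h' \<in> e'"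
          then have "e' \<in> M" using False by auto
          then show "e' = e" using pm_uniq[OF M \<open>h' \<in> H - {h,x}\<close> _ e(1)] e' e by auto
        qed
      qed
    qed
  qed
qed

lemma pm_finite: "finite H \<Longrightarrow> finite (perfect_matchings H)"
proof -
  assume "finite H"
  moreover have "perfect_matchings H \<subseteq> Pow (Pow H)" unfolding perfect_matchings_def by auto
  ultimately show ?thesis by (meson finite_Pow_iff rev_finite_subset)
qed

lemma pm_card: "finite H \<Longrightarrow> card (perfect_matchings H) = pmc (card H)"
proof (induction "card H" arbitrary: H rule: less_induct)
  case less
  show ?case
  proof (cases "H = {}")
    case True
    then show ?thesis by (simp add: pm_empty)
  next
    case False
    then obtain h where h: "h \<in> H" by blast
    have fin: "finite (H - {h})" using less.prems by simp
    have "card (perfect_matchings H) = (\<Sum>x\<in>H-{h}. card (insert {h,x} ` perfect_matchings (H-{h,x})))"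
      unfolding pm_step[OF h]
    proof (rule card_UN_disjoint[OF fin])
      show "\<forall>i\<in>H - {h}. finite (insert {h, i} ` perfect_matchings (H - {h, i}))"
        using less.prems by (intro ballI finite_imageI pm_finite) simp
      show "\<forall>i\<in>H - {h}. \<forall>j\<in>H - {h}. i \<noteq> j \<longrightarrow>
          insert {h, i} ` perfect_matchings (H - {h, i}) \<inter> insert {h, j} ` perfect_matchings (H - {h, j}) = {}"
      proof (intro ballI impI)
        fix i j assume ij: "i \<in> H - {h}" "j \<in> H - {h}" "i \<noteq> j"
        show "insert {h, i} ` perfect_matchings (H - {h, i}) \<inter> insert {h, j} ` perfect_matchings (H - {h, j}) = {}"
        proof (rule ccontr)
          assume "\<not> ?thesis"
          then obtain M M' where M: "M \<in> perfect_matchings (H - {h, i})" and M': "M' \<in> perfect_matchings (H - {h, j})"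
            and eq: "insert {h,i} M = insert {h,j} M'" by blast
          have "{h,i} \<in> insert {h,j} M'" using eq by blast
          moreover have "{h,i} \<notin> M'" using pm_sub[OF M', of "{h,i}"] by auto
          ultimately have "{h,i} = {h,j}" by blast
          then have "i \<in> {h,j}" by blast
          then show False using ij by blast
        qed
      qed
    qed
    also have "\<dots> = (\<Sum>x\<in>H-{h}. card (perfect_matchings (H-{h,x})))"
    proof (rule sum.cong[OF refl])
      fix x assume x: "x \<in> H - {h}"
      have "inj_on (insert {h,x}) (perfect_matchings (H-{h,x}))"
      proof (rule inj_onI)
        fix M M' assume M: "M \<in> perfect_matchings (H - {h, x})" and M': "M' \<in> perfect_matchings (H - {h, x})"
          and eq: "insert {h,x} M = insert {h,x} M'"
        have "{h,x} \<notin> M" using pm_sub[OF M, of "{h,x}"] by auto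
        moreover have "{h,x} \<notin> M'" using pm_sub[OF M', of "{h,x}"] by auto
        ultimately show "M = M'" using eq by (simp add: insert_ident)
      qed
      then show "card (insert {h,x} ` perfect_matchings (H-{h,x})) = card (perfect_matchings (H-{h,x}))"
        by (rule card_image)
    qed
    also have "\<dots> = (\<Sum>x\<in>H-{h}. pmc (card H - 2))"
    proof (rule sum.cong[OF refl])
      fix x assume x: "x \<in> H - {h}"
      have "card (H - {h,x}) = card H - 2" using x h less.prems
        by (auto simp: card_Diff_subset card_insert_if numeral_2_eq_2)
      moreover have "card {h,x} \<le> card H" using x h less.prems by (intro card_mono) auto
      then have "card H \<ge> 2" using x by (auto split: if_splits)
      moreover have "card (H - {h,x}) < card H" using calculation by linarith
      ultimately show "card (perfect_matchings (H-{h,x})) = pmc (card H - 2)"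
        using less.hyps[of "H - {h,x}"] less.prems by auto
    qed
    also have "\<dots> = (card H - 1) * pmc (card H - 2)"
      using h less.prems by simp
    also have "\<dots> = pmc (card H)"
    proof -
      have "card H \<ge> 1" using h less.prems False by (simp add: Suc_leI card_gt_0_iff)
      then obtain k where "card H = Suc k" by (metis Suc_le_D One_nat_def)
      then show ?thesis by (cases k) auto
    qed
    finally show ?thesis .
  qed
qed

lemma pmc_odd: "odd n \<Longrightarrow> pmc n = 0"
  by (induction n rule: pmc.induct) auto

lemma pmc_pos: "even n \<Longrightarrow> pmc n > 0"
  by (induction n rule: pmc.induct) auto

lemma pmc_ratio:
  "j \<le> N \<Longrightarrow> real (pmc (2*j)) * real (pmc (2*(N-j))) \<le> (real j / real N)^j * real (pmc (2*N))"
proof (induction j arbitrary: N)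
  case 0
  then show ?case by simp
next
  case (Suc j)
  then obtain N' where N: "N = Suc N'" "j \<le> N'" by (cases N) auto
  have IH: "real (pmc (2*j)) * real (pmc (2*(N'-j))) \<le> (real j / real N')^j * real (pmc (2*N'))"
    using Suc.IH N by simp
  have e1: "pmc (2*Suc j) = (2*j+1) * pmc (2*j)" by (simp add: numeral_2_eq_2)
  have e2: "pmc (2*(N - Suc j)) = pmc (2*(N'-j))" using N by simp
  have e3: "pmc (2*N) = (2*N'+1) * pmc (2*N')" using N by (simp add: numeral_2_eq_2)
  have r1: "(2*real j+1) \<le> (real (Suc j) / real N) * (2*real N'+1)"
    using N by (simp add: field_simps)
  have r2: "(real j / real N')^j \<le> (real (Suc j) / real N)^(Suc j-1)"
  proof (cases "N' = 0")
    case True then show ?thesis using N by simp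
  next
    case False
    have "real j / real N' \<le> real (Suc j) / real N"
      using N False by (simp add: field_simps)
    then show ?thesis by (simp add: power_mono)
  qed
  have "real (pmc (2*Suc j)) * real (pmc (2*(N-Suc j))) = (2*real j+1) * (real (pmc (2*j)) * real (pmc (2*(N'-j))))"
    unfolding e1 e2 by (simp add: algebra_simps)
  also have "\<dots> \<le> (2*real j+1) * ((real j / real N')^j * real (pmc (2*N')))"
    using IH by (intro mult_left_mono) auto
  also have "\<dots> \<le> ((real (Suc j) / real N) * (2*real N'+1)) * ((real (Suc j) / real N)^(Suc j-1) * real (pmc (2*N')))"
    using r1 r2 by (intro mult_mono) auto
  also have "\<dots> = (real (Suc j) / real N)^(Suc j) * real (pmc (2*N))"
  proof -
    have g: "\<And>q a P::real. q*a*(q^j*P) = q^Suc j*(a*P)" by (simp add: mult_ac)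
    have e3': "real (pmc (2*N)) = (2*real N'+1) * real (pmc (2*N'))" using e3 by (simp add: algebra_simps)
    show ?thesis unfolding e3' diff_Suc_1 by (rule g)
  qed
  finally show ?case .
qed

lemma closed_card:
  assumes fin: "finite H" and S: "S \<subseteq> H"
  shows "card {M \<in> perfect_matchings H. \<forall>e\<in>M. e \<inter> S \<noteq> {} \<longrightarrow> e \<subseteq> S}
           \<le> pmc (card S) * pmc (card H - card S)"
proof -
  let ?A = "{M \<in> perfect_matchings H. \<forall>e\<in>M. e \<inter> S \<noteq> {} \<longrightarrow> e \<subseteq> S}"
  let ?f = "\<lambda>M. ({e\<in>M. e \<subseteq> S}, {e\<in>M. \<not> e \<subseteq> S})"
  have "inj_on ?f ?A"
  proof (rule inj_onI)
    fix M M' assume "?f M = ?f M'"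
    then have "{e\<in>M. e \<subseteq> S} \<union> {e\<in>M. \<not> e \<subseteq> S} = {e\<in>M'. e \<subseteq> S} \<union> {e\<in>M'. \<not> e \<subseteq> S}"
      by simp
    then show "M = M'" by blast
  qed
  moreover have "?f ` ?A \<subseteq> perfect_matchings S \<times> perfect_matchings (H - S)"
  proof (rule subsetI)
    fix p assume "p \<in> ?f ` ?A"
    then obtain M where M: "M \<in> perfect_matchings H" and cl: "\<forall>e\<in>M. e \<inter> S \<noteq> {} \<longrightarrow> e \<subseteq> S"
      and p: "p = ?f M" by blast
    have 1: "{e\<in>M. e \<subseteq> S} \<in> perfect_matchings S"
      unfolding perfect_matchings_def
    proof (intro CollectI conjI ballI)
      fix e assume "e \<in> {e\<in>M. e \<subseteq> S}"
      then show "e \<subseteq> S" "card e = 2" using pm_sub[OF M] by auto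
    next
      fix h assume h: "h \<in> S"
      then have hH: "h \<in> H" using S by auto
      obtain e where e: "e \<in> M" "h \<in> e" using pm_ex[OF M hH] by blast
      then have "e \<subseteq> S" using cl h by blast
      then show "\<exists>!e. e \<in> {e\<in>M. e \<subseteq> S} \<and> h \<in> e"
        using e pm_uniq[OF M hH] by blast
    qed
    have 2: "{e\<in>M. \<not> e \<subseteq> S} \<in> perfect_matchings (H - S)"
      unfolding perfect_matchings_def
    proof (intro CollectI conjI ballI)
      fix e assume e: "e \<in> {e\<in>M. \<not> e \<subseteq> S}"
      then have "e \<inter> S = {}" using cl by blast
      then show "e \<subseteq> H - S" "card e = 2" using pm_sub[OF M] e by auto
    next
      fix h assume h: "h \<in> H - S"
      then have hH: "h \<in> H" by auto
      obtain e where e: "e \<in> M" "h \<in> e" using pm_ex[OF M hH] by blast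
      then have "\<not> e \<subseteq> S" using h by blast
      then show "\<exists>!e. e \<in> {e\<in>M. \<not> e \<subseteq> S} \<and> h \<in> e"
        using e pm_uniq[OF M hH] by blast
    qed
    show "p \<in> perfect_matchings S \<times> perfect_matchings (H - S)" using 1 2 p by simp
  qed
  moreover have "finite (perfect_matchings S \<times> perfect_matchings (H - S))"
    using fin S by (intro finite_cartesian_product pm_finite) (auto intro: finite_subset)
  ultimately have "card ?A \<le> card (perfect_matchings S \<times> perfect_matchings (H - S))"
    by (meson card_inj_on_le)
  also have "\<dots> = pmc (card S) * pmc (card H - card S)"
    using fin S by (simp add: card_cartesian_product pm_card card_Diff_subset finite_subset)
  finally show ?thesis .
qed

theorem lemma2:
  fixes r :: nat
  assumes "r \<ge> 3"
  shows "\<exists>C5 \<Delta>1 :: real. \<forall>n U (\<alpha>::real).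
           even (r * n) \<longrightarrow> U \<subseteq> {1..n} \<longrightarrow> card U \<ge> 1 \<longrightarrow> 0 < \<alpha> \<longrightarrow> \<alpha> < 1 \<longrightarrow>
           config_prob r n (\<lambda>M. real (cut_edges U M) \<le> \<alpha> * real r * real (card U))
             \<le> C5 * exp (- (real r / 2) * (1 - \<alpha>) * real (card U) * ln (real n / real (card U))
                        + \<Delta>1 * real (card U))"
proof (rule exI[of _ 1], rule exI[of _ "real r * ln 2"], intro allI impI)
  fix n :: nat and U :: "nat set" and \<alpha> :: real
  assume ev: "even (r * n)" and Usub: "U \<subseteq> {1..n}" and m1: "card U \<ge> 1"
    and a0: "0 < \<alpha>" and a1: "\<alpha> < 1"
  define m where "m = card U"
  define H where "H = half_edges r n"
  define HU where "HU = U \<times> {..<r}"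
  define N where "N = r * n div 2"
  have finU: "finite U" using Usub finite_subset by blast
  have mn: "m \<le> n" unfolding m_def using card_mono[OF _ Usub] by simp
  have m1': "m \<ge> 1" using m1 m_def by simp
  have n1: "n \<ge> 1" using mn m1' by simp
  have finH: "finite H" unfolding H_def half_edges_def by simp
  have cardH: "card H = 2 * N" unfolding H_def half_edges_def N_def using ev
    by (simp add: card_cartesian_product mult.commute)
  have cardH': "card H = n * r" unfolding H_def half_edges_def by (simp add: card_cartesian_product)
  have "0 < n * r" using n1 assms by simp
  then have N0: "N > 0" using cardH cardH' by linarith
  have HUH: "HU \<subseteq> H" unfolding HU_def H_def half_edges_def using Usub by auto
  have finHU: "finite HU" using HUH finH finite_subset by blast
  have cardHU: "card HU = m * r" unfolding HU_def m_def by (simp add: card_cartesian_product)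
  have memH: "\<And>h. h \<in> H \<Longrightarrow> h \<notin> HU \<Longrightarrow> fst h \<notin> U"
    unfolding H_def HU_def half_edges_def by auto
  have memHU: "\<And>h. h \<in> HU \<Longrightarrow> fst h \<in> U" unfolding HU_def by auto
  define A where "A S = {M \<in> perfect_matchings H. \<forall>e\<in>M. e \<inter> S \<noteq> {} \<longrightarrow> e \<subseteq> S}" for S
  define SS where "SS = {S \<in> Pow HU. (1-\<alpha>) * real r * real m \<le> real (card S)}"
  define E where "E = {M \<in> perfect_matchings H. real (cut_edges U M) \<le> \<alpha> * real r * real m}"
  define B where "B = (real m / real n) powr ((1-\<alpha>) * real r * real m / 2)"
  have B0: "B \<ge> 0" unfolding B_def by simp
  have sub: "E \<subseteq> \<Union>(A ` SS)"
  proof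
    fix M assume "M \<in> E"
    then have M: "M \<in> perfect_matchings H" and cutb: "real (cut_edges U M) \<le> \<alpha> * real r * real m"
      unfolding E_def by auto
    define S where "S = {h \<in> HU. \<forall>e\<in>M. h \<in> e \<longrightarrow> e \<subseteq> HU}"
    define g where "g h = (THE e. e \<in> M \<and> h \<in> e)" for h
    have g: "g h \<in> M \<and> h \<in> g h" if "h \<in> H" for h
    proof -
      have "\<exists>!e. e \<in> M \<and> h \<in> e" using M that unfolding perfect_matchings_def by blast
      then show ?thesis unfolding g_def by (rule theI')
    qed
    define C where "C = {e \<in> M. \<exists>h\<in>e. \<exists>h'\<in>e. fst h \<in> U \<and> fst h' \<notin> U}"
    have cutC: "cut_edges U M = card C" unfolding cut_edges_def C_def by simp
    have finM: "finite M" using M pm_sub[OF M] finH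
      by (meson Pow_iff finite_Pow_iff finite_subset subsetI)
    have finC: "finite C" unfolding C_def using finM by simp
    have out: "\<exists>h'. h' \<in> g h \<and> h' \<in> H \<and> h' \<notin> HU" if h: "h \<in> HU - S" for h
    proof -
      have hH: "h \<in> H" using h HUH by auto
      obtain e where e: "e \<in> M" "h \<in> e" "\<not> e \<subseteq> HU" using h unfolding S_def by blast
      have "e = g h" using pm_uniq[OF M hH e(1) _ e(2), of "g h"] g[OF hH] by blast
      then show ?thesis using e pm_sub[OF M e(1)] by blast
    qed
    have "inj_on g (HU - S)"
    proof (rule inj_onI)
      fix h1 h2 assume h1: "h1 \<in> HU - S" and h2: "h2 \<in> HU - S" and eq: "g h1 = g h2"
      show "h1 = h2"
      proof (rule ccontr)
        assume ne: "h1 \<noteq> h2"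
        obtain h' where h': "h' \<in> g h1" "h' \<notin> HU" using out[OF h1] by blast
        have h1H: "h1 \<in> H" "h2 \<in> H" using h1 h2 HUH by auto
        have sub3: "{h1,h2,h'} \<subseteq> g h1" using g[OF h1H(1)] g[OF h1H(2)] eq h' by auto
        have c2: "card (g h1) = 2" using pm_sub[OF M] g[OF h1H(1)] by blast
        then have "finite (g h1)" by (metis card.infinite zero_neq_numeral)
        then have "card {h1,h2,h'} \<le> 2" using card_mono[OF _ sub3] c2 by simp
        moreover have "h' \<noteq> h1" "h' \<noteq> h2" using h' h1 h2 by auto
        then have "card {h1,h2,h'} = 3" using ne by (simp add: card_insert_if)
        ultimately show False by simp
      qed
    qed
    moreover have "g ` (HU - S) \<subseteq> C"
    proof
      fix e assume "e \<in> g ` (HU - S)"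
      then obtain h where h: "h \<in> HU - S" and e: "e = g h" by blast
      have hH: "h \<in> H" using h HUH by auto
      obtain h' where h': "h' \<in> g h" "h' \<in> H" "h' \<notin> HU" using out[OF h] by blast
      show "e \<in> C" unfolding C_def using g[OF hH] e h' memH memHU h by blast
    qed
    ultimately have "card (HU - S) \<le> card C" using finC by (meson card_inj_on_le)
    moreover have SHU: "S \<subseteq> HU" unfolding S_def by auto
    ultimately have cHS: "card (HU - S) \<le> card C" by blast
    have "finite S" using SHU finHU finite_subset by blast
    then have "card (HU - S) = card HU - card S" using SHU by (rule card_Diff_subset)
    moreover have "card S \<le> card HU" using SHU finHU by (rule card_mono[rotated])
    ultimately have "card S + card C \<ge> m * r" using cardHU cHS by linarith
    then have "real (card S) + real (card C) \<ge> real m * real r"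
      by (metis of_nat_add of_nat_le_iff of_nat_mult)
    then have "real (card S) \<ge> (1-\<alpha>) * real r * real m" using cutb cutC by (simp add: algebra_simps)
    then have "S \<in> SS" unfolding SS_def using SHU by auto
    moreover have "M \<in> A S" unfolding A_def
    proof (intro CollectI conjI M ballI impI)
      fix e assume e: "e \<in> M" and ne: "e \<inter> S \<noteq> {}"
      then obtain h where h: "h \<in> e" "h \<in> S" by blast
      then have eHU: "e \<subseteq> HU" using e unfolding S_def by blast
      show "e \<subseteq> S"
      proof
        fix h'' assume h'': "h'' \<in> e"
        then have "h'' \<in> HU" using eHU by auto
        moreover have "\<forall>e'\<in>M. h'' \<in> e' \<longrightarrow> e' \<subseteq> HU"
          using pm_uniq[OF M _ e _ h''] HUH \<open>h'' \<in> HU\<close> eHU by blast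
        ultimately show "h'' \<in> S" unfolding S_def by blast
      qed
    qed
    ultimately show "M \<in> \<Union>(A ` SS)" by blast
  qed
  have each: "real (card (A S)) \<le> B * real (pmc (2*N))" if S: "S \<in> SS" for S
  proof -
    have SHU: "S \<subseteq> HU" and cs: "(1-\<alpha>) * real r * real m \<le> real (card S)" using S unfolding SS_def by auto
    have SH: "S \<subseteq> H" using SHU HUH by auto
    have cA: "card (A S) \<le> pmc (card S) * pmc (card H - card S)"
      unfolding A_def by (rule closed_card[OF finH SH])
    show ?thesis
    proof (cases "even (card S)")
      case False
      then have "card (A S) = 0" using cA pmc_odd by simp
      then show ?thesis using B0 by simp
    next
      case True
      then obtain j where j: "card S = 2*j" by blast
      have cSle: "card S \<le> m * r" using card_mono[OF finHU SHU] cardHU by simp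
      have mr: "m * r \<le> n * r" using mn by (rule mult_right_mono) simp
      have "2 * j \<le> 2 * N" unfolding j[symmetric] cardH[symmetric] cardH' using cSle mr by (rule le_trans)
      then have jN: "j \<le> N" by simp
      have "real (card (A S)) \<le> real (pmc (2*j)) * real (pmc (2*(N-j)))"
      proof -
        have "card H - card S = 2*(N-j)" using cardH j by simp
        then have "card (A S) \<le> pmc (2*j) * pmc (2*(N-j))" using cA j by simp
        then have "real (card (A S)) \<le> real (pmc (2*j) * pmc (2*(N-j)))" by (simp only: of_nat_le_iff)
        then show ?thesis by simp
      qed
      also have "\<dots> \<le> (real j / real N)^j * real (pmc (2*N))" by (rule pmc_ratio[OF jN])
      also have "\<dots> \<le> B * real (pmc (2*N))"
      proof (rule mult_right_mono)
        have mnpos: "real m / real n > 0" using m1' n1 by simp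
        have mnle: "real m / real n \<le> 1" using mn n1 by simp
        have "real j / real N \<le> real m / real n"
        proof -
          have "real (2*N) = real (n*r)" using cardH cardH' by simp
          then have eqN: "2 * real N = real r * real n" by simp
          have "2 * j \<le> m * r" using cSle j by simp
          then have "real (2 * j) \<le> real (m * r)" by (simp only: of_nat_le_iff)
          then have "2 * real j \<le> real m * real r" by simp
          then have "2 * real j * real n \<le> real m * real r * real n" by (simp add: mult_right_mono)
          moreover have "real m * real r * real n = 2 * (real m * real N)" using eqN by (simp add: mult_ac)
          ultimately have "real j * real n \<le> real m * real N" by linarith
          then show ?thesis using N0 n1 by (simp add: divide_simps)
        qed
        then have "(real j / real N)^j \<le> (real m / real n)^j" by (intro power_mono) auto
        also have "\<dots> = (real m / real n) powr (real j)" using mnpos by (simp add: powr_realpow)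
        also have "\<dots> \<le> B" unfolding B_def
        proof (rule powr_mono')
          show "(1 - \<alpha>) * real r * real m / 2 \<le> real j" using cs j by simp
          show "0 \<le> real m / real n" using mnpos by (rule less_imp_le)
          show "real m / real n \<le> 1" by (rule mnle)
        qed
        finally show "(real j / real N)^j \<le> B" .
        show "0 \<le> real (pmc (2*N))" by (rule of_nat_0_le_iff)
      qed
      finally show ?thesis .
    qed
  qed
  have finSS: "finite SS" unfolding SS_def using finHU by simp
  have "card E \<le> card (\<Union>(A ` SS))"
  proof (rule card_mono[OF _ sub])
    show "finite (\<Union>(A ` SS))" using finSS pm_finite[OF finH] unfolding A_def by auto
  qed
  also have "\<dots> \<le> (\<Sum>S\<in>SS. card (A S))" by (rule card_UN_le[OF finSS])
  finally have "real (card E) \<le> (\<Sum>S\<in>SS. real (card (A S)))" by (metis of_nat_le_iff of_nat_sum)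
  also have "\<dots> \<le> (\<Sum>S\<in>SS. B * real (pmc (2*N)))" by (rule sum_mono) (rule each)
  also have "\<dots> = real (card SS) * (B * real (pmc (2*N)))" by simp
  also have "\<dots> \<le> 2 ^ (m*r) * (B * real (pmc (2*N)))"
  proof (rule mult_right_mono)
    have "card SS \<le> card (Pow HU)" unfolding SS_def using finHU by (intro card_mono) auto
    then have "card SS \<le> 2 ^ (m*r)" using finHU cardHU by (simp add: card_Pow)
    then show "real (card SS) \<le> 2 ^ (m*r)" by (metis of_nat_le_iff of_nat_numeral of_nat_power)
  qed (use B0 in simp)
  finally have cE: "real (card E) \<le> 2 ^ (m*r) * B * real (pmc (2*N))" by (simp add: mult_ac)
  have pmcpos: "real (pmc (2*N)) > 0" using pmc_pos by simp
  have prob: "config_prob r n (\<lambda>M. real (cut_edges U M) \<le> \<alpha> * real r * real (card U))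
      = real (card E) / real (pmc (2*N))"
    unfolding config_prob_def E_def m_def H_def[symmetric] using pm_card[OF finH] cardH by simp
  have "real (card E) / real (pmc (2*N)) \<le> 2 ^ (m*r) * B"
    using cE pmcpos by (simp add: divide_simps)
  also have "2 ^ (m*r) * B = exp (- (real r / 2) * (1 - \<alpha>) * real m * ln (real n / real m)
                        + (real r * ln 2) * real m)"
  proof -
    have A1: "(2::real) ^ (m*r) = exp (real (m*r) * ln 2)" using exp_of_nat_mult[of "m*r" "ln (2::real)"] by simp
    have A2: "B = exp (((1-\<alpha>) * real r * real m / 2) * (ln (real m) - ln (real n)))"
      unfolding B_def powr_def using m1' n1 by (simp add: ln_div)
    have L: "ln (real n / real m) = ln (real n) - ln (real m)" using m1' n1 by (simp add: ln_div)
    have "2 ^ (m*r) * B = exp (real (m*r) * ln 2 + ((1-\<alpha>) * real r * real m / 2) * (ln (real m) - ln (real n)))"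
      unfolding A1 A2 by (simp add: exp_add)
    also have "\<dots> = exp (- (real r / 2) * (1 - \<alpha>) * real m * ln (real n / real m)
                        + (real r * ln 2) * real m)"
      unfolding L by (rule arg_cong[where f=exp]) (simp add: field_simps)
    finally show ?thesis .
  qed
  finally show "config_prob r n (\<lambda>M. real (cut_edges U M) \<le> \<alpha> * real r * real (card U))
             \<le> 1 * exp (- (real r / 2) * (1 - \<alpha>) * real (card U) * ln (real n / real (card U))
                        + (real r * ln 2) * real (card U))"
    using prob m_def by simp
qed

end
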